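(* Let $G$ be a graph on $n$ vertices with $m$ edges, let $t\in\mathbb{N}$, and let $F_1,F_2$ be arbitrary graphs, with $r=|V(F_1)|$. Suppose $G$ does not contain the disjoint union $F_1\cup F_2$ as a subgraph. Then for any copy of $F_1$ in $G$, with vertex set $U$, there is a set of $t$ vertices of $U$ whose common neighbourhood in $V(G)\setminus U$ has size at least \[\frac{m'-(n-r)(t-1)}{r-t+1}\Big/\binom{r}{t},\qquad\text{where } m'=m-\mathrm{ex}(n-r,F_2)-\binom{r}{2}.\]
   Context: $\mathrm{ex}(n,F)$ is the maximum number of edges in a graph on $n$ vertices not containing $F$ as a (not necessarily induced) subgraph. $F_1\cup F_2$ denotes the vertex-disjoint union of $F_1$ and $F_2$. *)

theory Defs
  imports Complex_Main
begin

definition graph :: "'a set \<Rightarrow> 'a set set \<Rightarrow> bool" where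
  "graph V E \<longleftrightarrow> finite V \<and> (\<forall>e\<in>E. e \<subseteq> V \<and> card e = 2)"

definition embedding ::
  "('b \<Rightarrow> 'a) \<Rightarrow> 'b set \<Rightarrow> 'b set set \<Rightarrow> 'a set \<Rightarrow> 'a set set \<Rightarrow> bool" where
  "embedding f VH EH V E \<longleftrightarrow>
     inj_on f VH \<and> f ` VH \<subseteq> V \<and> (\<forall>e\<in>EH. f ` e \<in> E)"

definition contains :: "'a set \<Rightarrow> 'a set set \<Rightarrow> 'b set \<Rightarrow> 'b set set \<Rightarrow> bool" where
  "contains V E VH EH \<longleftrightarrow> (\<exists>f. embedding f VH EH V E)"

definition disj_union_V :: "'b set \<Rightarrow> 'c set \<Rightarrow> ('b + 'c) set" where
  "disj_union_V V1 V2 = Inl ` V1 \<union> Inr ` V2"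

definition disj_union_E :: "'b set set \<Rightarrow> 'c set set \<Rightarrow> ('b + 'c) set set" where
  "disj_union_E E1 E2 = (\<lambda>e. Inl ` e) ` E1 \<union> (\<lambda>e. Inr ` e) ` E2"

text \<open>Turan number ex(n, F): maximum number of edges of a graph on n vertices
  (taken as {0..<n}) not containing F as a subgraph.  (Sup of an empty set of
  naturals is 0; this convention is irrelevant for the theorem below.)\<close>

definition ex :: "nat \<Rightarrow> 'b set \<Rightarrow> 'b set set \<Rightarrow> nat" where
  "ex n VF EF = Sup {card E | E. graph {0..<n} E \<and> \<not> contains {0..<n} E VF EF}"

definition common_nbhd :: "'a set set \<Rightarrow> 'a set \<Rightarrow> 'a set \<Rightarrow> 'a set" where
  "common_nbhd E T W = {v \<in> W. \<forall>u\<in>T. {u, v} \<in> E}"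

end

theory Submission
  imports Defs
begin

lemma union_emb:
  assumes "embedding f V1 E1 V E" "embedding h V2 E2 V E" "f ` V1 \<inter> h ` V2 = {}"
  shows "contains V E (disj_union_V V1 V2) (disj_union_E E1 E2)"
proof -
  let ?p = "case_sum f h"
  have i1: "inj_on f V1" "f ` V1 \<subseteq> V" "\<forall>e\<in>E1. f ` e \<in> E" using assms(1) by (auto simp: embedding_def)
  have i2: "inj_on h V2" "h ` V2 \<subseteq> V" "\<forall>e\<in>E2. h ` e \<in> E" using assms(2) by (auto simp: embedding_def)
  have "inj_on ?p (disj_union_V V1 V2)"
  proof (rule inj_onI)
    fix x y assume x: "x \<in> disj_union_V V1 V2" and y: "y \<in> disj_union_V V1 V2" and eq: "?p x = ?p y"
    show "x = y"
    proof (cases x)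
      case (Inl a)
      then have a: "a \<in> V1" using x by (auto simp: disj_union_V_def)
      show ?thesis
      proof (cases y)
        case (Inl b)
        then have "b \<in> V1" using y by (auto simp: disj_union_V_def)
        then show ?thesis using a eq Inl \<open>x = Inl a\<close> i1(1) by (simp add: inj_on_def)
      next
        case (Inr b)
        then have "b \<in> V2" using y by (auto simp: disj_union_V_def)
        then show ?thesis using a eq Inr \<open>x = Inl a\<close> assms(3) by auto
      qed
    next
      case (Inr a)
      then have a: "a \<in> V2" using x by (auto simp: disj_union_V_def)
      show ?thesis
      proof (cases y)
        case (Inl b)
        then have "b \<in> V1" using y by (auto simp: disj_union_V_def)
        then show ?thesis using a eq Inl \<open>x = Inr a\<close> assms(3) by auto
      next
        case (Inr b)
        then have "b \<in> V2" using y by (auto simp: disj_union_V_def)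
        then show ?thesis using a eq Inr \<open>x = Inr a\<close> i2(1) by (simp add: inj_on_def)
      qed
    qed
  qed
  moreover have "?p ` disj_union_V V1 V2 \<subseteq> V"
    using i1(2) i2(2) unfolding disj_union_V_def by (auto simp: image_Un image_image)
  moreover have "\<forall>e\<in>disj_union_E E1 E2. ?p ` e \<in> E"
  proof
    fix e assume "e \<in> disj_union_E E1 E2"
    then consider (l) e0 where "e0 \<in> E1" "e = Inl ` e0" | (r) e0 where "e0 \<in> E2" "e = Inr ` e0"
      unfolding disj_union_E_def by blast
    then show "?p ` e \<in> E"
    proof cases
      case l then show ?thesis using i1(3) by (simp add: image_image)
    next
      case r then show ?thesis using i2(3) by (simp add: image_image)
    qed
  qed
  ultimately show ?thesis unfolding contains_def embedding_def by blast
qed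
lemma ex_ge:
  assumes "graph W Ew" "\<not> contains W Ew V2 E2"
  shows "card Ew \<le> ex (card W) V2 E2"
proof -
  let ?k = "card W"
  have fW: "finite W" using assms(1) by (simp add: graph_def)
  obtain g where g: "bij_betw g W {0..<?k}"
    using finite_same_card_bij[OF fW, of "{0..<?k}"] fW by auto
  have ginj: "inj_on g W" using g by (simp add: bij_betw_def)
  have Esub: "Ew \<subseteq> Pow W" using assms(1) by (auto simp: graph_def)
  define E' where "E' = (\<lambda>e. g ` e) ` Ew"
  have "inj_on (\<lambda>e. g ` e) Ew"
  proof (rule inj_on_image)
    show "inj_on g (\<Union> Ew)" using ginj Esub by (meson Union_least PowD inj_on_subset subsetD)
  qed
  hence cardE': "card E' = card Ew" unfolding E'_def by (simp add: card_image)
  have grE': "graph {0..<?k} E'"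
    unfolding graph_def E'_def
  proof (intro conjI ballI)
    fix e' assume "e' \<in> (\<lambda>e. g ` e) ` Ew"
    then obtain e where e: "e \<in> Ew" "e' = g ` e" by auto
    have "e \<subseteq> W" "card e = 2" using e assms(1) by (auto simp: graph_def)
    then show "e' \<subseteq> {0..<?k}" using e g by (auto simp: bij_betw_def)
    show "card e' = 2" using e \<open>e \<subseteq> W\<close> \<open>card e = 2\<close> ginj
      by (simp add: card_image inj_on_subset)
  qed simp
  have ncE': "\<not> contains {0..<?k} E' V2 E2"
  proof
    assume "contains {0..<?k} E' V2 E2"
    then obtain h where h: "embedding h V2 E2 {0..<?k} E'" by (auto simp: contains_def)
    let ?gi = "inv_into W g"
    have gi: "bij_betw ?gi {0..<?k} W" using g by (rule bij_betw_inv_into)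
    have "embedding (?gi \<circ> h) V2 E2 W Ew"
      unfolding embedding_def
    proof (intro conjI ballI)
      show "inj_on (?gi \<circ> h) V2"
      proof (rule comp_inj_on)
        show "inj_on h V2" using h by (simp add: embedding_def)
        have "h ` V2 \<subseteq> {0..<?k}" using h by (simp add: embedding_def)
        then show "inj_on ?gi (h ` V2)" using gi by (meson bij_betw_def inj_on_subset)
      qed
      show "(?gi \<circ> h) ` V2 \<subseteq> W"
        using h gi unfolding embedding_def bij_betw_def by auto
      fix e assume "e \<in> E2"
      then have "h ` e \<in> E'" using h by (auto simp: embedding_def)
      then obtain e0 where e0: "e0 \<in> Ew" "h ` e = g ` e0" by (auto simp: E'_def)
      have "e0 \<subseteq> W" using e0 Esub by auto
      then have "?gi ` g ` e0 = e0" using ginj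
        by (simp add: inv_into_image_cancel)
      then show "(?gi \<circ> h) ` e \<in> Ew" using e0 by (simp only: image_comp[symmetric])
    qed
    then show False using assms(2) by (auto simp: contains_def)
  qed
  let ?S = "{card E | E. graph {0..<?k} E \<and> \<not> contains {0..<?k} E V2 E2}"
  have "bdd_above ?S"
  proof
    fix x assume "x \<in> ?S"
    then obtain E where "x = card E" "graph {0..<?k} E" by auto
    then have "E \<subseteq> Pow {0..<?k}" by (auto simp: graph_def)
    then show "x \<le> card (Pow {0..<?k::nat})" using \<open>x = card E\<close>
      by (simp add: card_mono)
  qed
  moreover have "card E' \<in> ?S" using grE' ncE' by blast
  ultimately have "card E' \<le> Sup ?S" by (simp add: cSup_upper)
  then show ?thesis using cardE' by (simp add: ex_def)
qed

lemma binom_lb: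
  fixes d r t :: nat
  assumes "d \<le> r" "t \<le> r"
  shows "(real d - real t + 1) / (real r - real t + 1) \<le> real (d choose t)"
proof (cases "t \<le> d")
  case True
  then have "1 \<le> d choose t" by (simp add: Suc_leI)
  moreover have "(real d - real t + 1) / (real r - real t + 1) \<le> 1"
    using assms True by (simp add: divide_le_eq_1)
  ultimately show ?thesis by linarith
next
  case False
  then have "real d - real t + 1 \<le> 0" by simp
  moreover have "real r - real t + 1 > 0" using assms by simp
  ultimately have "(real d - real t + 1) / (real r - real t + 1) \<le> 0"
    by (simp add: divide_nonpos_pos)
  then show ?thesis by simp
qed

theorem mainTheorem5:
  fixes V :: "'a set" and E :: "'a set set"
    and V1 :: "'b set" and E1 :: "'b set set"
    and V2 :: "'c set" and E2 :: "'c set set"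
    and t :: nat and f :: "'b \<Rightarrow> 'a"
  assumes G: "graph V E"
    and F1: "graph V1 E1"
    and F2: "graph V2 E2"
    and free: "\<not> contains V E (disj_union_V V1 V2) (disj_union_E E1 E2)"
    and copy: "embedding f V1 E1 V E"
    and t: "t \<le> card V1"
  shows "\<exists>T. T \<subseteq> f ` V1 \<and> card T = t \<and>
     real (card (common_nbhd E T (V - f ` V1))) \<ge>
       ((real (card E) - real (ex (card V - card V1) V2 E2) - real (card V1 choose 2)
          - real (card V - card V1) * (real t - 1))
         / (real (card V1) - real t + 1))
       / real (card V1 choose t)"
proof -
  define U where "U = f ` V1"
  define W where "W = V - U"
  define r where "r = card V1"
  define k where "k = card V - card V1"
  have fV: "finite V" using G by (simp add: graph_def)
  have UV: "U \<subseteq> V" using copy by (simp add: embedding_def U_def)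
  have fU: "finite U" using UV fV finite_subset by blast
  have fW: "finite W" using fV by (simp add: W_def)
  have cU: "card U = r" using copy by (simp add: embedding_def U_def r_def card_image)
  have cW: "card W = k" unfolding W_def k_def using card_Diff_subset[OF fU UV] cU r_def by simp
  have fE: "finite E" using G fV unfolding graph_def
    by (meson Pow_iff finite_Pow_iff finite_subset subsetI)
  define N where "N v = {u\<in>U. {u,v}\<in>E}" for v
  define EU where "EU = {e\<in>E. e \<subseteq> U}"
  define EW where "EW = {e\<in>E. e \<subseteq> W}"
  define EC where "EC = E - EU - EW"
  have "E = EU \<union> EW \<union> EC" unfolding EU_def EW_def EC_def by auto
  hence "card E \<le> card (EU \<union> EW) + card EC" using card_Un_le[of "EU \<union> EW" EC] by simp
  moreover have "card (EU \<union> EW) \<le> card EU + card EW" by (rule card_Un_le)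
  ultimately have "card E \<le> card EU + card EW + card EC" by linarith
  moreover have "card EU \<le> r choose 2"
  proof -
    have "EU \<subseteq> {B. B \<subseteq> U \<and> card B = 2}" using G by (auto simp: EU_def graph_def)
    hence "card EU \<le> card {B. B \<subseteq> U \<and> card B = 2}"
      using fU by (intro card_mono) auto
    thus ?thesis using n_subsets[OF fU] cU by simp
  qed
  moreover have "card EW \<le> ex k V2 E2"
  proof -
    have gW: "graph W EW" using fW by (auto simp: graph_def EW_def G[unfolded graph_def])
    have "\<not> contains W EW V2 E2"
    proof
      assume "contains W EW V2 E2"
      then obtain h where h: "embedding h V2 E2 W EW" by (auto simp: contains_def)
      have "embedding h V2 E2 V E" using h by (auto simp: embedding_def W_def EW_def)
      moreover have "f ` V1 \<inter> h ` V2 = {}" using h by (auto simp: embedding_def W_def U_def)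
      ultimately show False using union_emb[OF copy] free by blast
    qed
    thus ?thesis using ex_ge[OF gW] cW by simp
  qed
  moreover have "card EC \<le> (\<Sum>v\<in>W. card (N v))"
  proof -
    have "EC \<subseteq> (\<lambda>(v,u). {u,v}) ` (SIGMA v:W. N v)"
    proof
      fix e assume e: "e \<in> EC"
      then have "e \<in> E" "\<not> e \<subseteq> U" "\<not> e \<subseteq> W" by (auto simp: EC_def EU_def EW_def)
      moreover then have "e \<subseteq> V" "card e = 2" using G by (auto simp: graph_def)
      ultimately obtain a b where ab: "e = {a,b}" "a \<in> V" "b \<in> V"
        by (metis card_2_iff insert_subset)
      show "e \<in> (\<lambda>(v,u). {u,v}) ` (SIGMA v:W. N v)"
      proof (cases "a \<in> U")
        case True
        then have "b \<in> W" using ab \<open>\<not> e \<subseteq> U\<close> by (auto simp: W_def)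
        then have "(b,a) \<in> (SIGMA v:W. N v)" using True ab \<open>e \<in> E\<close> by (auto simp: N_def)
        then show ?thesis using ab by force
      next
        case False
        then have "a \<in> W" using ab by (auto simp: W_def)
        have "b \<in> U" using ab \<open>\<not> e \<subseteq> W\<close> False by (auto simp: W_def)
        then have "(a,b) \<in> (SIGMA v:W. N v)" using \<open>a \<in> W\<close> ab \<open>e \<in> E\<close>
          by (auto simp: N_def insert_commute)
        then show ?thesis using ab by force
      qed
    qed
    hence "card EC \<le> card ((\<lambda>(v,u). {u,v}) ` (SIGMA v:W. N v))"
      by (intro card_mono) (auto intro: finite_SigmaI simp: fW fU N_def)
    also have "\<dots> \<le> card (SIGMA v:W. N v)" by (rule card_image_le) (auto simp: fW fU N_def)
    also have "\<dots> = (\<Sum>v\<in>W. card (N v))" by (rule card_SigmaI) (auto simp: fW fU N_def)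
    finally show ?thesis .
  qed
  ultimately have sumd: "real (card E) - real (ex k V2 E2) - real (r choose 2)
       \<le> (\<Sum>v\<in>W. real (card (N v)))"
    by (simp only: of_nat_sum[symmetric]; linarith)
  define Ts where "Ts = {T. T \<subseteq> U \<and> card T = t}"
  have fTs: "finite Ts" using fU by (simp add: Ts_def)
  have cTs: "card Ts = r choose t" using n_subsets[OF fU] cU by (simp add: Ts_def)
  have cn: "common_nbhd E T W = {v\<in>W. T \<subseteq> N v}" if "T \<in> Ts" for T
    using that by (auto simp: common_nbhd_def N_def Ts_def)
  define S where "S = (\<Sum>T\<in>Ts. card (common_nbhd E T W))"
  have "S = (\<Sum>T\<in>Ts. \<Sum>v\<in>W. if T \<subseteq> N v then 1 else 0)"
    unfolding S_def
    by (rule sum.cong) (simp_all add: cn fW sum.inter_filter[symmetric])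
  also have "\<dots> = (\<Sum>v\<in>W. \<Sum>T\<in>Ts. if T \<subseteq> N v then 1 else 0)" by (rule sum.swap)
  also have "\<dots> = (\<Sum>v\<in>W. card (N v) choose t)"
  proof (rule sum.cong)
    fix v assume "v \<in> W"
    have "(\<Sum>T\<in>Ts. if T \<subseteq> N v then 1 else 0) = card {T\<in>Ts. T \<subseteq> N v}"
      unfolding card_eq_sum by (rule sum.inter_filter[OF fTs, symmetric])
    also have "{T\<in>Ts. T \<subseteq> N v} = {T. T \<subseteq> N v \<and> card T = t}"
      by (auto simp: Ts_def N_def)
    also have "card \<dots> = card (N v) choose t" by (rule n_subsets) (simp add: fU N_def)
    finally show "(\<Sum>T\<in>Ts. if T \<subseteq> N v then 1 else 0) = card (N v) choose t" .
  qed simp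
  finally have Seq: "S = (\<Sum>v\<in>W. card (N v) choose t)" .
  have "(\<Sum>v\<in>W. (real (card (N v)) - real t + 1) / (real r - real t + 1)) \<le> real S"
    unfolding Seq of_nat_sum
  proof (rule sum_mono)
    fix v assume "v \<in> W"
    have "N v \<subseteq> U" by (auto simp: N_def)
    then have "card (N v) \<le> r" using cU fU card_mono by blast
    then show "(real (card (N v)) - real t + 1) / (real r - real t + 1) \<le> real (card (N v) choose t)"
      using binom_lb t r_def by simp
  qed
  moreover have "(\<Sum>v\<in>W. (real (card (N v)) - real t + 1) / (real r - real t + 1))
     = ((\<Sum>v\<in>W. real (card (N v))) - real k * (real t - 1)) / (real r - real t + 1)"
    by (simp add: sum_divide_distrib[symmetric] sum_subtractf sum.distrib cW algebra_simps)
  moreover have "(real (card E) - real (ex k V2 E2) - real (r choose 2) - real k * (real t - 1))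
        / (real r - real t + 1)
      \<le> ((\<Sum>v\<in>W. real (card (N v))) - real k * (real t - 1)) / (real r - real t + 1)"
    using sumd t r_def by (intro divide_right_mono) auto
  ultimately have low: "(real (card E) - real (ex k V2 E2) - real (r choose 2) - real k * (real t - 1))
        / (real r - real t + 1) \<le> real S" by linarith
  have neTs: "Ts \<noteq> {}"
    using t cU r_def obtain_subset_with_card_n[of t U] by (auto simp: Ts_def)
  define M where "M = Max ((\<lambda>T. card (common_nbhd E T W)) ` Ts)"
  have "M \<in> (\<lambda>T. card (common_nbhd E T W)) ` Ts" unfolding M_def using fTs neTs by (intro Max_in) auto
  then obtain T0 where T0: "T0 \<in> Ts" "card (common_nbhd E T0 W) = M" by auto
  have Mge: "card (common_nbhd E T W) \<le> M" if "T \<in> Ts" for T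
    unfolding M_def using fTs that by (intro Max_ge) auto
  have "S \<le> card Ts * M" unfolding S_def
    using sum_bounded_above[of Ts "\<lambda>T. card (common_nbhd E T W)" M] Mge by simp
  hence "real S \<le> real (r choose t) * real M" using cTs by (metis of_nat_le_iff of_nat_mult)
  moreover have pos: "real (r choose t) > 0" using t r_def by simp
  ultimately have "real S / real (r choose t) \<le> real M" by (simp add: divide_le_eq mult.commute)
  moreover have "(real (card E) - real (ex k V2 E2) - real (r choose 2) - real k * (real t - 1))
        / (real r - real t + 1) / real (r choose t) \<le> real S / real (r choose t)"
    using low pos by (intro divide_right_mono) auto
  ultimately show ?thesis using T0
    by (intro exI[of _ T0]) (auto simp: Ts_def U_def W_def r_def k_def)
qed
end
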